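(* Let $1<p<\lambda<\infty$ and $1<r<\mu<\infty$ with $\lambda<\mu$ and $\frac r\mu>\frac p\lambda$, and let $1\le\kappa,\nu\le\infty$. Let $\alpha\in(0,n/\lambda)$ be given by $\frac\alpha n=\frac1\lambda-\frac1\mu$. Then $M_\alpha$ does not map $\mathcal M^{\lambda}_{p\kappa}(\mathbb R^n)$ continuously into $\mathcal M^{\mu}_{r\nu}(\mathbb R^n)$; i.e. there is no constant $C$ with $\|M_\alpha f\|_{\mathcal M^{\mu}_{r\nu}}\le C\|f\|_{\mathcal M^{\lambda}_{p\kappa}}$ for all $f\in\mathcal M^{\lambda}_{p\kappa}(\mathbb R^n)$.
   Context: Lorentz spaces: for measurable $\Omega$, $d_f(s)=|\{x\in\Omega:|f(x)|>s\}|$, $f^*(t)=\inf\{s>0:d_f(s)\le t\}$; for $d<\infty$, $\|f\|_{L^{pd}(\Omega)}=\big(\frac dp\int_0^{|\Omega|}[t^{1/p}f^*(t)]^d\frac{dt}{t}\big)^{1/d}$; $\|f\|_{L^{p\infty}(\Omega)}=\sup_tt^{1/p}f^*(t)$. Morrey–Lorentz spaces: $\|f\|_{\mathcal M^{\lambda}_{q\kappa}(\Omega)}:=\sup_{Q}|Q|^{\frac1\lambda-\frac1q}\|f\|_{L^{q\kappa}(Q)}$ over $Q=B\cap\Omega$, $B$ a ball. Fractional maximal function: $(M_\alpha f)(x)=\sup_{B\ni x}|B|^{\alpha/n}\frac1{|B|}\int_B|f|$, sup over balls containing $x$. *)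

theory Defs
  imports "HOL-Analysis.Analysis"
begin

definition epow :: "ennreal \<Rightarrow> real \<Rightarrow> ennreal" where
  "epow x d = (if x = top then top else ennreal (enn2real x powr d))"

text \<open>Distribution function d_g(s) = |{x in Omega. |g x| > s}| (g given as the
  nonnegative, possibly infinite, function |f|).\<close>
definition distrib_fun :: "'a::euclidean_space set \<Rightarrow> ('a \<Rightarrow> ennreal) \<Rightarrow> real \<Rightarrow> ennreal" where
  "distrib_fun \<Omega> g s = emeasure lebesgue {x \<in> \<Omega>. g x > ennreal s}"

definition rearr :: "'a::euclidean_space set \<Rightarrow> ('a \<Rightarrow> ennreal) \<Rightarrow> real \<Rightarrow> ennreal" where
  "rearr \<Omega> g t = (INF s \<in> {s::real. s > 0 \<and> distrib_fun \<Omega> g s \<le> ennreal t}. ennreal s)"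

text \<open>Lorentz (quasi)norm of L^{p d}(Omega); d = top encodes d = infinity.\<close>
definition lorentz_norm :: "'a::euclidean_space set \<Rightarrow> real \<Rightarrow> ennreal \<Rightarrow> ('a \<Rightarrow> ennreal) \<Rightarrow> ennreal" where
  "lorentz_norm \<Omega> p d g =
    (if d = top then (SUP t \<in> {0<..}. ennreal (t powr (1/p)) * rearr \<Omega> g t)
     else epow (ennreal (enn2real d / p) *
            (\<integral>\<^sup>+ t. indicator {t. 0 < t \<and> ennreal t < emeasure lebesgue \<Omega>} t *
                 (epow (ennreal (t powr (1/p)) * rearr \<Omega> g t) (enn2real d) * ennreal (1 / t)) \<partial>lborel))
          (1 / enn2real d))"

definition morrey_lorentz_norm :: "'a::euclidean_space set \<Rightarrow> real \<Rightarrow> real \<Rightarrow> ennreal \<Rightarrow> ('a \<Rightarrow> ennreal) \<Rightarrow> ennreal" where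
  "morrey_lorentz_norm \<Omega> lam q \<kappa> g =
    (SUP (c, r) \<in> UNIV \<times> {0<..}.
       ennreal (measure lebesgue (ball c r \<inter> \<Omega>) powr (1/lam - 1/q)) *
       lorentz_norm (ball c r \<inter> \<Omega>) q \<kappa> g)"

definition frac_max :: "real \<Rightarrow> ('a::euclidean_space \<Rightarrow> real) \<Rightarrow> 'a \<Rightarrow> ennreal" where
  "frac_max \<alpha> f x =
    (SUP (c, r) \<in> {(c, r). 0 < r \<and> x \<in> ball c r}.
       ennreal (measure lebesgue (ball c r) powr (\<alpha> / real DIM('a) - 1)) *
       (\<integral>\<^sup>+ y \<in> ball c r. ennreal \<bar>f y\<bar> \<partial>lebesgue))"

end

theory Submission
  imports Defs
begin

lemma epow_mono: "x \<le> y \<Longrightarrow> 0 \<le> d \<Longrightarrow> epow x d \<le> epow y d"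
  unfolding epow_def
  apply (cases "y = top")
   apply simp
  apply (cases "x = top")
   apply (simp add: top_unique)
  apply (auto intro!: ennreal_leI powr_mono2 enn2real_mono simp: less_top)
  done

lemma epow_ennreal: "0 \<le> a \<Longrightarrow> epow (ennreal a) d = ennreal (a powr d)"
  by (simp add: epow_def)

lemma distrib_ind:
  fixes F \<Omega> :: "'a::euclidean_space set"
  shows "distrib_fun \<Omega> (\<lambda>x. ennreal (indicator F x :: real)) s =
     (if s < 1 then emeasure lebesgue (\<Omega> \<inter> F) else 0)"
proof -
  have "{x \<in> \<Omega>. ennreal (indicator F x :: real) > ennreal s} = (if s < 1 then \<Omega> \<inter> F else {})"
    by (auto simp: indicator_def ennreal_less_iff ennreal_lessI split: if_splits)
  then show ?thesis unfolding distrib_fun_def by simp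
qed

lemma rearr_ind:
  fixes F \<Omega> :: "'a::euclidean_space set"
  assumes m: "emeasure lebesgue (\<Omega> \<inter> F) = ennreal m"
  shows "rearr \<Omega> (\<lambda>x. ennreal (indicator F x :: real)) t \<le> (if t < m then 1 else 0)"
proof (cases "t < m")
  case True
  have "rearr \<Omega> (\<lambda>x. ennreal (indicator F x :: real)) t \<le> ennreal 1"
    unfolding rearr_def by (rule INF_lower) (auto simp: distrib_ind)
  with True show ?thesis by simp
next
  case False
  have "rearr \<Omega> (\<lambda>x. ennreal (indicator F x :: real)) t \<le> 0"
  proof (rule ennreal_le_epsilon)
    fix e :: real assume "0 < e"
    have "rearr \<Omega> (\<lambda>x. ennreal (indicator F x :: real)) t \<le> ennreal e"
      unfolding rearr_def
      by (rule INF_lower) (use \<open>0 < e\<close> False m in \<open>auto simp: distrib_ind intro!: ennreal_leI\<close>)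
    then show "rearr \<Omega> (\<lambda>x. ennreal (indicator F x :: real)) t \<le> 0 + ennreal e" by simp
  qed
  with False show ?thesis by simp
qed

lemma lorentz_ind_upper:
  fixes F \<Omega> :: "'a::euclidean_space set"
  assumes p: "0 < p" and d: "1 \<le> d" and m: "emeasure lebesgue (\<Omega> \<inter> F) = ennreal m" and m0: "0 \<le> m"
  shows "lorentz_norm \<Omega> p d (\<lambda>x. ennreal (indicator F x :: real)) \<le> ennreal (m powr (1/p))"
proof (cases "d = top")
  case True
  have "ennreal (t powr (1/p)) * rearr \<Omega> (\<lambda>x. ennreal (indicator F x :: real)) t \<le> ennreal (m powr (1/p))"
    if "t > 0" for t
  proof -
    have "ennreal (t powr (1/p)) * rearr \<Omega> (\<lambda>x. ennreal (indicator F x :: real)) t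
        \<le> ennreal (t powr (1/p)) * (if t < m then 1 else 0)"
      by (rule mult_left_mono[OF rearr_ind[OF m]]) simp
    also have "\<dots> \<le> ennreal (m powr (1/p))"
      using that p by (auto intro!: ennreal_leI powr_mono2)
    finally show ?thesis .
  qed
  then show ?thesis using True unfolding lorentz_norm_def by (auto intro!: SUP_least)
next
  case False
  define d' where "d' = enn2real d"
  have dd: "d = ennreal d'" using False d'_def by (cases d) auto
  have d'1: "1 \<le> d'" using d dd by (simp add: ennreal_le_iff[symmetric])
  define q where "q = d' / p"
  have q: "q > 0" using d'1 p by (simp add: q_def)
  have ptw: "indicator {t. 0 < t \<and> ennreal t < emeasure lebesgue \<Omega>} t *
       (epow (ennreal (t powr (1/p)) * rearr \<Omega> (\<lambda>x. ennreal (indicator F x :: real)) t) d' * ennreal (1 / t))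
     \<le> ennreal (t powr (q - 1)) * indicator {0..m} t" for t :: real
  proof (cases "0 < t")
    case False then show ?thesis by (simp add: indicator_def)
  next
    case t: True
    show ?thesis
    proof (cases "t < m")
      case True
      have "epow (ennreal (t powr (1/p)) * rearr \<Omega> (\<lambda>x. ennreal (indicator F x :: real)) t) d'
           \<le> epow (ennreal (t powr (1/p))) d'"
        apply (rule epow_mono)
        using rearr_ind[OF m, of t] True d'1
        by (auto intro: mult_left_le)
      also have "\<dots> = ennreal (t powr (1/p * d'))"
        by (simp add: epow_ennreal powr_powr)
      finally have "epow (ennreal (t powr (1/p)) * rearr \<Omega> (\<lambda>x. ennreal (indicator F x :: real)) t) d' * ennreal (1 / t)
          \<le> ennreal (t powr (1/p * d')) * ennreal (1/t)" by (rule mult_right_mono) simp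
      also have "\<dots> = ennreal (t powr (q - 1))"
      proof -
        have "t powr (q - 1) = t powr (1/p * d') * (1/t)"
          using t by (simp add: powr_diff q_def)
        then show ?thesis using t by (simp add: ennreal_mult'[symmetric])
      qed
      finally show ?thesis using True t by (auto simp: indicator_def)
    next
      case False
      have "rearr \<Omega> (\<lambda>x. ennreal (indicator F x :: real)) t = 0"
        using rearr_ind[OF m, of t] False by simp
      then show ?thesis using d'1 by (simp add: epow_def)
    qed
  qed
  have int: "(\<integral>\<^sup>+ t. ennreal (t powr (q - 1)) * indicator {0..m} t \<partial>lborel) = ennreal (m powr q / q)"
    using nn_integral_has_integral_lebesgue'[OF _ has_integral_powr_from_0[of "q - 1" m]] q m0 by simp
  have "lorentz_norm \<Omega> p d (\<lambda>x. ennreal (indicator F x :: real))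
      \<le> epow (ennreal (d' / p) * ennreal (m powr q / q)) (1 / d')"
    unfolding lorentz_norm_def using False
    apply (simp add: dd[symmetric] d'_def[symmetric])
    apply (rule epow_mono)
     apply (rule mult_left_mono)
      apply (subst int[symmetric])
      apply (rule nn_integral_mono)
    using ptw apply simp
    using d'1 by auto
  also have "\<dots> = ennreal (m powr (1/p))"
    using q p d'1 m0
    by (simp add: ennreal_mult'[symmetric] epow_ennreal powr_powr q_def)
  finally show ?thesis .
qed

lemma rearr_lower:
  fixes \<Omega> E :: "'a::euclidean_space set" and g :: "'a \<Rightarrow> ennreal"
  assumes EO: "E \<subseteq> \<Omega>" and Em: "E \<in> sets lebesgue" and e: "emeasure lebesgue E = ennreal e"
    and meas: "\<And>s. {x\<in>\<Omega>. g x > ennreal s} \<in> sets lebesgue"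
    and ge: "\<And>x. x \<in> E \<Longrightarrow> ennreal c \<le> g x" and c: "0 < c" and t: "t < e" and e0: "0 < e"
  shows "ennreal c \<le> rearr \<Omega> g t"
  unfolding rearr_def
proof (rule INF_greatest)
  fix s assume "s \<in> {s. 0 < s \<and> distrib_fun \<Omega> g s \<le> ennreal t}"
  then have s: "0 < s" "distrib_fun \<Omega> g s \<le> ennreal t" by auto
  show "ennreal c \<le> ennreal s"
  proof (rule ccontr)
    assume "\<not> ennreal c \<le> ennreal s"
    then have sc: "s < c" by (meson ennreal_leI not_le)
    have "E \<subseteq> {x\<in>\<Omega>. g x > ennreal s}"
    proof
      fix x assume "x \<in> E"
      have "ennreal s < ennreal c" using sc s by (simp add: ennreal_lessI)
      also have "\<dots> \<le> g x" using ge \<open>x \<in> E\<close> .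
      finally show "x \<in> {x\<in>\<Omega>. g x > ennreal s}" using EO \<open>x \<in> E\<close> by auto
    qed
    then have "emeasure lebesgue E \<le> distrib_fun \<Omega> g s"
      unfolding distrib_fun_def by (rule emeasure_mono) (rule meas)
    with s e have "ennreal e \<le> ennreal t" by simp
    then show False using t e0 by (simp add: ennreal_le_iff2)
  qed
qed

lemma lorentz_lower:
  fixes \<Omega> E :: "'a::euclidean_space set" and g :: "'a \<Rightarrow> ennreal"
  assumes EO: "E \<subseteq> \<Omega>" and Om: "\<Omega> \<in> sets lebesgue" and Em: "E \<in> sets lebesgue"
    and e: "emeasure lebesgue E = ennreal e" and e0: "0 < e"
    and meas: "\<And>s. {x\<in>\<Omega>. g x > ennreal s} \<in> sets lebesgue"
    and ge: "\<And>x. x \<in> E \<Longrightarrow> ennreal c \<le> g x" and c: "0 < c"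
    and r: "1 \<le> r" and d: "1 \<le> d"
  shows "ennreal (c * (e/2) powr (1/r) / (2*r)) \<le> lorentz_norm \<Omega> r d g"
proof -
  have rl: "ennreal c \<le> rearr \<Omega> g t" if "t < e" for t
    by (rule rearr_lower[OF EO Em e meas ge c that e0])
  have key: "c * (e/2) powr (1/r) / (2*r) \<le> c * (e/2) powr (1/r)"
    using c e0 r by (simp add: divide_le_eq mult_le_cancel_left1 not_less)
  show ?thesis
  proof (cases "d = top")
    case True
    have "ennreal (c * (e/2) powr (1/r) / (2*r)) \<le> ennreal ((e/2) powr (1/r)) * ennreal c"
      using key c by (simp add: ennreal_mult'[symmetric] mult.commute)
    also have "\<dots> \<le> ennreal ((e/2) powr (1/r)) * rearr \<Omega> g (e/2)"
      by (rule mult_left_mono[OF rl]) (use e0 in auto)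
    also have "\<dots> \<le> lorentz_norm \<Omega> r d g"
      unfolding lorentz_norm_def using True e0
      by (auto intro!: SUP_upper2[where i="e/2"])
    finally show ?thesis .
  next
    case False
    define d' where "d' = enn2real d"
    have dd: "d = ennreal d'" using False d'_def by (cases d) auto
    have d'1: "1 \<le> d'" using d dd by (simp add: ennreal_le_iff[symmetric])
    define X where "X = ((e/2) powr (1/r) * c) powr d'"
    have X0: "0 < X" using e0 c by (simp add: X_def)
    have Oe: "ennreal e \<le> emeasure lebesgue \<Omega>"
      using emeasure_mono[OF EO Om] e by simp
    have ptw: "ennreal (X / e) * indicator {e/2<..<e} t \<le>
       indicator {t. 0 < t \<and> ennreal t < emeasure lebesgue \<Omega>} t *
       (epow (ennreal (t powr (1/r)) * rearr \<Omega> g t) d' * ennreal (1 / t))" for t :: real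
    proof (cases "t \<in> {e/2<..<e}")
      case False then show ?thesis by simp
    next
      case True
      then have t: "e/2 < t" "t < e" "0 < t" using e0 by auto
      have tO: "ennreal t < emeasure lebesgue \<Omega>"
        using Oe t e0 by (meson ennreal_lessI order_less_le_trans)
      have "ennreal X = epow (ennreal ((e/2) powr (1/r) * c)) d'"
        using e0 c by (simp add: X_def epow_ennreal)
      also have "\<dots> \<le> epow (ennreal (t powr (1/r) * c)) d'"
        using t c e0 r d'1 by (intro epow_mono ennreal_leI mult_right_mono powr_mono2) auto
      also have "\<dots> \<le> epow (ennreal (t powr (1/r)) * rearr \<Omega> g t) d'"
        using t c d'1 by (intro epow_mono) (auto simp: ennreal_mult' intro!: mult_left_mono rl)
      finally have 1: "ennreal X \<le> epow (ennreal (t powr (1/r)) * rearr \<Omega> g t) d'" .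
      have 2: "ennreal (1/e) \<le> ennreal (1/t)"
        using t e0 by (intro ennreal_leI) (simp add: frac_le)
      have "ennreal (X / e) = ennreal X * ennreal (1/e)"
        using X0 e0 by (simp add: ennreal_mult'[symmetric])
      also have "\<dots> \<le> epow (ennreal (t powr (1/r)) * rearr \<Omega> g t) d' * ennreal (1 / t)"
        by (rule mult_mono[OF 1 2]) auto
      finally show ?thesis using True t tO by (simp add: indicator_def)
    qed
    have int: "(\<integral>\<^sup>+ t. ennreal (X / e) * indicator {e/2<..<e} t \<partial>lborel) = ennreal (X / 2)"
      using e0 X0 by (simp add: nn_integral_cmult_indicator ennreal_mult'[symmetric])
    have "ennreal (X / (2*r)) \<le> ennreal (d' / r) * ennreal (X / 2)"
      using X0 r d'1 by (simp add: ennreal_mult'[symmetric] divide_simps mult_right_mono)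
    also have "\<dots> \<le> ennreal (d' / r) * (\<integral>\<^sup>+ t. indicator {t. 0 < t \<and> ennreal t < emeasure lebesgue \<Omega>} t *
       (epow (ennreal (t powr (1/r)) * rearr \<Omega> g t) d' * ennreal (1 / t)) \<partial>lborel)"
      by (rule mult_left_mono) (auto simp: int[symmetric] intro!: nn_integral_mono ptw)
    finally have 3: "epow (ennreal (X / (2*r))) (1/d') \<le> lorentz_norm \<Omega> r d g"
      unfolding lorentz_norm_def using False d'1 by (auto simp: d'_def intro!: epow_mono)
    have "c * (e/2) powr (1/r) / (2*r) \<le> (X / (2*r)) powr (1/d')"
    proof -
      have "X powr (1/d') = c * (e/2) powr (1/r)"
        using e0 c d'1 by (simp add: X_def powr_powr mult.commute)
      moreover have "(2*r) powr (1/d') \<le> (2*r) powr 1"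
        using r d'1 by (intro powr_mono) auto
      moreover have "(X / (2*r)) powr (1/d') = X powr (1/d') / (2*r) powr (1/d')"
        using X0 r by (simp add: powr_divide)
      ultimately show ?thesis using r c e0
        by (simp add: frac_le)
    qed
    then have "ennreal (c * (e/2) powr (1/r) / (2*r)) \<le> epow (ennreal (X / (2*r))) (1/d')"
      using X0 r by (simp add: epow_ennreal ennreal_leI)
    with 3 show ?thesis by simp
  qed
qed

lemma frac_max_ge:
  fixes f :: "'a::euclidean_space \<Rightarrow> real"
  assumes "0 < r" "x \<in> ball c r"
  shows "ennreal (measure lebesgue (ball c r) powr (\<alpha> / real DIM('a) - 1)) *
       (\<integral>\<^sup>+ y \<in> ball c r. ennreal \<bar>f y\<bar> \<partial>lebesgue) \<le> frac_max \<alpha> f x"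
  unfolding frac_max_def
  by (rule SUP_upper2[where i="(c, r)"]) (use assms in auto)

lemma frac_max_open:
  fixes f :: "'a::euclidean_space \<Rightarrow> real"
  shows "open {x. frac_max \<alpha> f x > ennreal s}"
proof (subst open_subopen, intro ballI)
  fix x assume "x \<in> {x. frac_max \<alpha> f x > ennreal s}"
  then have "ennreal s < frac_max \<alpha> f x" by simp
  then obtain c r where cr: "0 < r" "x \<in> ball c r"
    and lt: "ennreal s < ennreal (measure lebesgue (ball c r) powr (\<alpha> / real DIM('a) - 1)) *
       (\<integral>\<^sup>+ y \<in> ball c r. ennreal \<bar>f y\<bar> \<partial>lebesgue)"
    unfolding frac_max_def less_SUP_iff by auto
  have "ball c r \<subseteq> {x. frac_max \<alpha> f x > ennreal s}"
  proof
    fix y assume "y \<in> ball c r"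
    have "ennreal (measure lebesgue (ball c r) powr (\<alpha> / real DIM('a) - 1)) *
       (\<integral>\<^sup>+ y \<in> ball c r. ennreal \<bar>f y\<bar> \<partial>lebesgue) \<le> frac_max \<alpha> f y"
      by (rule frac_max_ge[OF cr(1) \<open>y \<in> ball c r\<close>])
    with lt show "y \<in> {x. frac_max \<alpha> f x > ennreal s}"
      using order.strict_trans2 by blast
  qed
  with cr show "\<exists>T. open T \<and> x \<in> T \<and> T \<subseteq> {x. frac_max \<alpha> f x > ennreal s}"
    by auto
qed

lemma frac_max_meas:
  fixes f :: "'a::euclidean_space \<Rightarrow> real"
  assumes "\<Omega> \<in> sets lebesgue"
  shows "{x\<in>\<Omega>. frac_max \<alpha> f x > ennreal s} \<in> sets lebesgue"
proof -
  have "{x\<in>\<Omega>. frac_max \<alpha> f x > ennreal s} = \<Omega> \<inter> {x. frac_max \<alpha> f x > ennreal s}" by auto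
  moreover have "{x. frac_max \<alpha> f x > ennreal s} \<in> sets lebesgue"
    by (metis borel_open frac_max_open sets_completionI_sets sets_lborel)
  ultimately show ?thesis using assms by auto
qed

lemma count1:
  fixes N :: nat and t w :: real
  assumes N: "0 < N" and w: "0 \<le> w"
  shows "real (card {j. j < N \<and> \<bar>real j / real N - t\<bar> \<le> w}) \<le> 2 * w * N + 1"
proof (cases "{j. j < N \<and> \<bar>real j / real N - t\<bar> \<le> w} = {}")
  case True then show ?thesis using w by (simp only: card.empty) simp
next
  case False
  define S where "S = {j. j < N \<and> \<bar>real j / real N - t\<bar> \<le> w}"
  have fin: "finite S" unfolding S_def by auto
  define j0 where "j0 = Min S"
  have j0S: "j0 \<in> S" using False fin unfolding j0_def S_def by (intro Min_in) auto
  have "S \<subseteq> {j0..j0 + nat \<lfloor>2*w*N\<rfloor>}"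
  proof
    fix j assume jS: "j \<in> S"
    have "j0 \<le> j" using fin jS unfolding j0_def by simp
    have "real j / N - real j0 / N \<le> 2 * w" using jS j0S unfolding S_def by auto
    then have "real j - real j0 \<le> 2 * w * N" using N by (simp add: field_simps diff_divide_distrib[symmetric])
    then have "int j - int j0 \<le> \<lfloor>2*w*N\<rfloor>" by (simp add: le_floor_iff)
    then show "j \<in> {j0..j0 + nat \<lfloor>2*w*N\<rfloor>}" using \<open>j0 \<le> j\<close> by auto
  qed
  then have "card S \<le> card {j0..j0 + nat \<lfloor>2*w*N\<rfloor>}" by (rule card_mono[rotated]) auto
  then have "real (card S) \<le> real (nat \<lfloor>2*w*N\<rfloor>) + 1" by simp
  also have "\<dots> \<le> 2 * w * N + 1" using w by simp
  finally show ?thesis unfolding S_def .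
qed

definition corner :: "nat \<Rightarrow> ('a::euclidean_space \<Rightarrow> nat) \<Rightarrow> 'a" where
  "corner N k = (\<Sum>b\<in>Basis. (real (k b) / real N) *\<^sub>R b)"

definition cube :: "nat \<Rightarrow> real \<Rightarrow> ('a::euclidean_space \<Rightarrow> nat) \<Rightarrow> 'a set" where
  "cube N \<delta> k = cbox (corner N k) (corner N k + \<delta> *\<^sub>R One)"

definition KK :: "nat \<Rightarrow> ('a::euclidean_space \<Rightarrow> nat) set" where
  "KK N = (\<Pi>\<^sub>E b\<in>(Basis::'a set). {..<N})"

definition FF :: "nat \<Rightarrow> real \<Rightarrow> 'a::euclidean_space set" where
  "FF N \<delta> = (\<Union>k\<in>KK N. cube N \<delta> k)"

lemma corner_inner: "b \<in> Basis \<Longrightarrow> corner N k \<bullet> b = real (k b) / real N"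
  unfolding corner_def by (simp add: inner_sum_left inner_Basis if_distrib sum.delta cong: if_cong)

lemma mem_cube: "x \<in> cube N \<delta> k \<longleftrightarrow> (\<forall>b\<in>Basis. real (k b) / real N \<le> x \<bullet> b \<and> x \<bullet> b \<le> real (k b) / real N + \<delta>)"
  unfolding cube_def mem_box by (auto simp: inner_add_left corner_inner)

lemma cube_lmeas: "cube N \<delta> k \<in> lmeasurable"
  unfolding cube_def by simp

lemma content_cube: "0 \<le> \<delta> \<Longrightarrow> measure lebesgue (cube N \<delta> k :: 'a set) = \<delta> ^ DIM('a::euclidean_space)"
  unfolding cube_def by (simp add: content_cbox inner_add_left)

lemma emeasure_cube: "0 \<le> \<delta> \<Longrightarrow> emeasure lebesgue (cube N \<delta> k :: 'a::euclidean_space set) = ennreal (\<delta> ^ DIM('a))"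
  using content_cube[of \<delta> N k] emeasure_eq_measure2[of "cube N \<delta> k" lebesgue] cube_lmeas[of N \<delta> k]
  by simp
  
lemma finite_KK: "finite (KK N)"
  unfolding KK_def by (auto intro!: finite_PiE)

lemma card_KK: "card (KK N :: ('a::euclidean_space \<Rightarrow> nat) set) = N ^ DIM('a)"
  unfolding KK_def by (simp add: card_PiE)

lemma FF_lmeas: "FF N \<delta> \<in> lmeasurable"
  unfolding FF_def using finite_KK by (intro fmeasurable.finite_UN) (auto simp: cube_lmeas)

lemma cube_disj:
  assumes N: "0 < N" and d: "\<delta> < 1 / real N"
  shows "disjoint_family_on (cube N \<delta> :: _ \<Rightarrow> 'a::euclidean_space set) (KK N)"
  unfolding disjoint_family_on_def
proof (intro ballI impI)
  fix k k' :: "'a \<Rightarrow> nat" assume k: "k \<in> KK N" "k' \<in> KK N" "k \<noteq> k'"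
  then obtain b where b: "b \<in> Basis" "k b \<noteq> k' b"
    unfolding KK_def by (metis PiE_ext)
  show "cube N \<delta> k \<inter> cube N \<delta> k' = {}"
  proof (rule ccontr)
    assume "cube N \<delta> k \<inter> cube N \<delta> k' \<noteq> {}"
    then obtain x where "x \<in> cube N \<delta> k" "x \<in> cube N \<delta> k'" by auto
    then have h: "real (k b) / N \<le> x \<bullet> b" "x \<bullet> b \<le> real (k b) / N + \<delta>"
      "real (k' b) / N \<le> x \<bullet> b" "x \<bullet> b \<le> real (k' b) / N + \<delta>"
      using b(1) unfolding mem_cube by auto
    have "1 \<le> \<bar>real (k b) - real (k' b)\<bar>" using b(2) by linarith
    then have "1 / real N \<le> \<bar>real (k b) / N - real (k' b) / N\<bar>"
      using N by (simp add: diff_divide_distrib[symmetric] abs_div divide_right_mono)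
    with h d show False by linarith
  qed
qed

lemma measure_FF:
  assumes N: "0 < N" and d: "0 \<le> \<delta>" "\<delta> < 1 / real N"
  shows "measure lebesgue (FF N \<delta> :: 'a::euclidean_space set) = real N ^ DIM('a) * \<delta> ^ DIM('a)"
proof -
  have "measure lebesgue (FF N \<delta> :: 'a set) = (\<Sum>k\<in>KK N. measure lebesgue (cube N \<delta> k :: 'a set))"
    unfolding FF_def
    by (rule measure_finite_Union[OF finite_KK _ cube_disj[OF N d(2)]])
       (auto simp: cube_lmeas fmeasurableD emeasure_cube[OF d(1)])
  also have "\<dots> = real N ^ DIM('a) * \<delta> ^ DIM('a)"
    using d by (simp add: content_cube card_KK)
  finally show ?thesis .
qed

lemma measure_FF_ball:
  assumes N: "0 < N" and d: "0 \<le> \<delta>" and R: "0 \<le> R"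
  shows "measure lebesgue (FF N \<delta> \<inter> ball x R :: 'a::euclidean_space set)
     \<le> (2 * (R + \<delta>) * N + 1) ^ DIM('a) * \<delta> ^ DIM('a)"
proof -
  define K' where "K' = {k\<in>KK N. cube N \<delta> k \<inter> ball x R \<noteq> ({} :: 'a set)}"
  define T where "T = (\<lambda>b::'a. {j. j < N \<and> \<bar>real j / real N - x \<bullet> b\<bar> \<le> R + \<delta>})"
  have finK': "finite K'" unfolding K'_def by (rule finite_subset[OF _ finite_KK]) auto
  have sub: "FF N \<delta> \<inter> ball x R \<subseteq> (\<Union>k\<in>K'. cube N \<delta> k)"
    unfolding FF_def K'_def by auto
  have "measure lebesgue (FF N \<delta> \<inter> ball x R) \<le> measure lebesgue (\<Union>k\<in>K'. cube N \<delta> k)"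
    using finK' by (intro measure_mono_fmeasurable[OF sub]) (auto simp: cube_lmeas fmeasurableD FF_lmeas intro!: fmeasurableD[OF fmeasurable.finite_UN])
  also have "\<dots> \<le> (\<Sum>k\<in>K'. measure lebesgue (cube N \<delta> k :: 'a set))"
    using finK' by (intro measure_UNION_le) (auto simp: cube_lmeas fmeasurableD)
  also have "\<dots> = real (card K') * \<delta> ^ DIM('a)"
    using d by (simp add: content_cube)
  also have "real (card K') \<le> (2 * (R + \<delta>) * N + 1) ^ DIM('a)"
  proof -
    have "K' \<subseteq> (\<Pi>\<^sub>E b\<in>Basis. T b)"
    proof
      fix k assume "k \<in> K'"
      then obtain y where y: "y \<in> cube N \<delta> k" "y \<in> ball x R" and kK: "k \<in> KK N"
        unfolding K'_def by auto
      show "k \<in> (\<Pi>\<^sub>E b\<in>Basis. T b)"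
      proof (rule PiE_I)
        fix b :: 'a assume b: "b \<in> Basis"
        have "\<bar>(y - x) \<bullet> b\<bar> \<le> norm (y - x)" using b by (rule Basis_le_norm)
        also have "\<dots> < R" using y(2) by (simp add: dist_norm norm_minus_commute)
        finally have 1: "\<bar>y \<bullet> b - x \<bullet> b\<bar> < R" by (simp add: inner_diff_left)
        have 2: "real (k b) / N \<le> y \<bullet> b" "y \<bullet> b \<le> real (k b) / N + \<delta>"
          using y(1) b unfolding mem_cube by auto
        have "k b < N" using kK b unfolding KK_def by auto
        with 1 2 show "k b \<in> T b" unfolding T_def by auto
      next
        fix b :: 'a assume "b \<notin> Basis"
        then show "k b = undefined" using kK unfolding KK_def by auto
      qed
    qed
    then have "card K' \<le> card (\<Pi>\<^sub>E b\<in>Basis. T b)"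
      by (rule card_mono[rotated]) (auto simp: T_def intro!: finite_PiE)
    also have "\<dots> = (\<Prod>b\<in>Basis. card (T b))" by (simp add: card_PiE)
    finally have "real (card K') \<le> (\<Prod>b\<in>(Basis::'a set). real (card (T b)))"
      by (metis of_nat_le_iff of_nat_prod)
    also have "\<dots> \<le> (\<Prod>b\<in>(Basis::'a set). 2 * (R + \<delta>) * N + 1)"
      using N R d count1[of N "R + \<delta>"] unfolding T_def by (intro prod_mono) (auto simp: algebra_simps)
    also have "\<dots> = (2 * (R + \<delta>) * N + 1) ^ DIM('a)" by simp
    finally show ?thesis .
  qed
  then have "real (card K') * \<delta> ^ DIM('a) \<le> (2 * (R + \<delta>) * N + 1) ^ DIM('a) * \<delta> ^ DIM('a)"
    using d by (intro mult_right_mono) auto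
  finally show ?thesis .
qed

lemma morrey_term_bound:
  fixes \<omega> n p lam N \<delta> R m :: real
  assumes \<omega>: "0 < \<omega>" and n: "0 < n" and p: "0 < p" and lam: "p < lam"
    and N: "0 < N" and \<delta>: "0 < \<delta>" "\<delta> \<le> 1 / N" and R: "0 < R" and m: "0 \<le> m"
    and m1: "m \<le> \<omega> * R powr n"
    and m2: "m \<le> (2 * (R + \<delta>) * N + 1) powr n * \<delta> powr n"
    and m3: "m \<le> (N * \<delta>) powr n"
  shows "(\<omega> * R powr n) powr (1/lam - 1/p) * m powr (1/p)
     \<le> (\<omega> powr (1/lam) + \<omega> powr (1/lam - 1/p) * 5 powr (n/p) + \<omega> powr (1/lam - 1/p))
        * (\<delta> powr (n/lam) + (N * \<delta>) powr (n/p))"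
proof -
  define e where "e = 1/lam - 1/p"
  have e: "e < 0" using p lam unfolding e_def by (simp add: frac_less2)
  have lam0: "0 < lam" using p lam by simp
  define V where "V = \<omega> * R powr n"
  have V: "0 < V" using \<omega> R by (simp add: V_def)
  have Ve: "V powr e = \<omega> powr e * R powr (n * e)"
    using \<omega> R by (simp add: V_def powr_mult powr_powr)
  define K where "K = \<omega> powr (1/lam) + \<omega> powr e * 5 powr (n/p) + \<omega> powr e"
  define S where "S = \<delta> powr (n/lam) + (N * \<delta>) powr (n/p)"
  have S1: "\<delta> powr (n/lam) \<le> S" and S2: "(N * \<delta>) powr (n/p) \<le> S" by (simp_all add: S_def)
  have K1: "\<omega> powr (1/lam) \<le> K" and K2: "\<omega> powr e * 5 powr (n/p) \<le> K" and K3: "\<omega> powr e \<le> K"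
    by (simp_all add: K_def)
  have K0: "0 \<le> K" by (simp add: K_def)
  have ne: "n * e + n / p = n / lam" by (simp add: e_def algebra_simps)
  have main: "V powr e * m powr (1/p) \<le> K * S"
  proof (cases "R \<le> \<delta>")
    case True
    have "V powr e * m powr (1/p) \<le> V powr e * V powr (1/p)"
      using m m1 p by (intro mult_left_mono powr_mono2) (auto simp: V_def)
    also have "\<dots> = V powr (1/lam)" by (simp add: powr_add[symmetric] e_def)
    also have "\<dots> = \<omega> powr (1/lam) * R powr (n/lam)"
      using \<omega> R by (simp add: V_def powr_mult powr_powr)
    also have "\<dots> \<le> \<omega> powr (1/lam) * \<delta> powr (n/lam)"
      using True R n lam0 by (intro mult_left_mono powr_mono2) auto
    also have "\<dots> \<le> K * S" using K1 S1 K0 by (intro mult_mono) auto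
    finally show ?thesis .
  next
    case R\<delta>: False
    show ?thesis
    proof (cases "R \<le> 1 / N")
      case True
      have RN: "R * N \<le> 1" using True N by (simp add: field_simps)
      have "\<delta> * N \<le> R * N" using R\<delta> N by (intro mult_right_mono) auto
      moreover have "2 * (R + \<delta>) * N + 1 = 2*(R*N) + 2*(\<delta>*N) + 1" by (simp add: algebra_simps)
      ultimately have "(2 * (R + \<delta>) * N + 1) \<le> 5" using RN by linarith
      then have "(2 * (R + \<delta>) * N + 1) powr n \<le> 5 powr n"
        using n \<delta> N R by (intro powr_mono2) auto
      then have "m \<le> 5 powr n * \<delta> powr n"
        using m2 by (meson mult_right_mono order.trans powr_ge_zero)
      then have "m powr (1/p) \<le> (5 powr n * \<delta> powr n) powr (1/p)"
        using m p by (intro powr_mono2) auto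
      also have "\<dots> = 5 powr (n/p) * \<delta> powr (n/p)"
        using \<delta> by (simp add: powr_mult powr_powr)
      finally have mp: "m powr (1/p) \<le> 5 powr (n/p) * \<delta> powr (n/p)" .
      have "V powr e \<le> (\<omega> * \<delta> powr n) powr e"
        using e \<omega> \<delta> R\<delta> n by (intro powr_mono2') (auto simp: V_def intro!: mult_left_mono powr_mono2)
      also have "\<dots> = \<omega> powr e * \<delta> powr (n * e)"
        using \<omega> \<delta> by (simp add: powr_mult powr_powr)
      finally have "V powr e * m powr (1/p) \<le> \<omega> powr e * \<delta> powr (n * e) * (5 powr (n/p) * \<delta> powr (n/p))"
        using mp by (intro mult_mono) auto
      also have "\<dots> = \<omega> powr e * 5 powr (n/p) * \<delta> powr (n * e + n/p)"
        by (simp add: powr_add)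
      also have "\<dots> = \<omega> powr e * 5 powr (n/p) * \<delta> powr (n/lam)" by (simp add: ne)
      also have "\<dots> \<le> K * S" using K2 S1 K0 by (intro mult_mono) auto
      finally show ?thesis .
    next
      case RN: False
      show ?thesis
      proof (cases "R \<le> 1")
        case True
        have "1 < R * N" using RN N by (simp add: field_simps)
        moreover have "\<delta> * N \<le> 1" using \<delta> N by (simp add: field_simps)
        ultimately have "(2 * (R + \<delta>) * N + 1) \<le> 5 * R * N" using N by (simp add: algebra_simps)
        then have "(2 * (R + \<delta>) * N + 1) powr n \<le> (5 * R * N) powr n"
          using n \<delta> N R by (intro powr_mono2) auto
        then have "m \<le> (5 * R * N) powr n * \<delta> powr n"
          using m2 by (meson mult_right_mono order.trans powr_ge_zero)
        also have "\<dots> = 5 powr n * R powr n * (N * \<delta>) powr n"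
          using R N \<delta> by (simp add: powr_mult)
        finally have "m powr (1/p) \<le> (5 powr n * R powr n * (N * \<delta>) powr n) powr (1/p)"
          using m p by (intro powr_mono2) auto
        also have "\<dots> = 5 powr (n/p) * R powr (n/p) * (N * \<delta>) powr (n/p)"
          using R N \<delta> by (simp add: powr_mult powr_powr)
        finally have mp: "m powr (1/p) \<le> 5 powr (n/p) * R powr (n/p) * (N * \<delta>) powr (n/p)" .
        have "V powr e * m powr (1/p) \<le> \<omega> powr e * R powr (n * e) * (5 powr (n/p) * R powr (n/p) * (N * \<delta>) powr (n/p))"
          unfolding Ve by (intro mult_left_mono mp) auto
        also have "\<dots> = \<omega> powr e * 5 powr (n/p) * R powr (n * e + n/p) * (N * \<delta>) powr (n/p)"
          by (simp add: powr_add)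
        also have "\<dots> = \<omega> powr e * 5 powr (n/p) * R powr (n/lam) * (N * \<delta>) powr (n/p)" by (simp add: ne)
        also have "\<dots> \<le> \<omega> powr e * 5 powr (n/p) * 1 * (N * \<delta>) powr (n/p)"
          using True R n lam0 by (intro mult_left_mono mult_right_mono) (auto simp: powr_le1)
        also have "\<dots> \<le> K * S" using K2 S2 K0 by (intro mult_mono) auto
        finally show ?thesis .
      next
        case False
        have "m powr (1/p) \<le> ((N * \<delta>) powr n) powr (1/p)"
          using m m3 p by (intro powr_mono2) auto
        also have "\<dots> = (N * \<delta>) powr (n/p)" by (simp add: powr_powr)
        finally have mp: "m powr (1/p) \<le> (N * \<delta>) powr (n/p)" .
        have "R powr (n * e) \<le> 1"
          using powr_mono[of "n*e" 0 R] False e n R by (simp add: mult_pos_neg less_imp_le)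
        then have "V powr e \<le> \<omega> powr e" unfolding Ve
          by (simp add: mult_left_le)
        then have "V powr e * m powr (1/p) \<le> \<omega> powr e * (N * \<delta>) powr (n/p)"
          using mp by (intro mult_mono) auto
        also have "\<dots> \<le> K * S" using K3 S2 K0 by (intro mult_mono) auto
        finally show ?thesis .
      qed
    qed
  qed
  then show ?thesis by (simp add: V_def K_def S_def e_def)
qed

lemma morrey_f_upper:
  fixes N :: nat and \<delta> p lam :: real and \<kappa> :: ennreal
  assumes N: "0 < N" and \<delta>: "0 < \<delta>" "\<delta> < 1 / real N" and p: "0 < p" and lam: "p < lam"
    and \<kappa>: "1 \<le> \<kappa>"
  shows "morrey_lorentz_norm UNIV lam p \<kappa> (\<lambda>x. ennreal \<bar>indicator (FF N \<delta> :: 'a::euclidean_space set) x :: real\<bar>)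
     \<le> ennreal ((unit_ball_vol (DIM('a)) powr (1/lam) + unit_ball_vol (DIM('a)) powr (1/lam - 1/p) * 5 powr (DIM('a)/p)
          + unit_ball_vol (DIM('a)) powr (1/lam - 1/p))
        * (\<delta> powr (DIM('a)/lam) + (real N * \<delta>) powr (DIM('a)/p)))"
    (is "morrey_lorentz_norm UNIV lam p \<kappa> ?g \<le> ennreal ?B")
proof -
  have *: "ennreal (measure lebesgue (ball c R \<inter> UNIV) powr (1/lam - 1/p)) * lorentz_norm (ball c R \<inter> UNIV) p \<kappa> ?g
     \<le> ennreal ?B" if R0: "0 < R" for c :: 'a and R :: real
  proof -
  define m where "m = measure lebesgue (FF N \<delta> \<inter> ball c R :: 'a set)"
  have m0: "0 \<le> m" by (simp add: m_def)
  have lmF: "FF N \<delta> \<inter> ball c R \<in> lmeasurable" using FF_lmeas lmeasurable_ball by (rule fmeasurable.Int)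
  have em: "emeasure lebesgue (ball c R \<inter> UNIV \<inter> FF N \<delta>) = ennreal m"
    using emeasure_eq_measure2[OF lmF] by (simp add: m_def Int_commute)
  have gg: "?g = (\<lambda>x. ennreal (indicator (FF N \<delta>) x :: real))" by simp
  have L: "lorentz_norm (ball c R \<inter> UNIV) p \<kappa> ?g \<le> ennreal (m powr (1/p))"
    unfolding gg by (rule lorentz_ind_upper[OF p \<kappa> em m0])
  define \<omega> where "\<omega> = unit_ball_vol (real DIM('a))"
  have \<omega>: "0 < \<omega>" by (simp add: \<omega>_def)
  have mb: "measure lebesgue (ball c R) = \<omega> * R powr DIM('a)"
    using R0 by (simp add: content_ball \<omega>_def powr_realpow)
  have m1: "m \<le> \<omega> * R powr DIM('a)"
    unfolding m_def mb[symmetric] by (rule measure_mono_fmeasurable) (auto simp: fmeasurableD lmF)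
  have m2: "m \<le> (2 * (R + \<delta>) * N + 1) powr DIM('a) * \<delta> powr DIM('a)"
  proof -
    have pos: "0 < 2 * (R + \<delta>) * N + 1" using \<delta> R0 by (intro add_nonneg_pos) auto
    show ?thesis
      unfolding m_def powr_realpow[OF pos] powr_realpow[OF \<delta>(1)]
      using measure_FF_ball[OF N less_imp_le[OF \<delta>(1)] less_imp_le[OF R0], of c] by simp
  qed
  have "m \<le> measure lebesgue (FF N \<delta> :: 'a set)"
    unfolding m_def by (rule measure_mono_fmeasurable) (auto simp: fmeasurableD FF_lmeas)
  also have "\<dots> = real N ^ DIM('a) * \<delta> ^ DIM('a)"
    by (rule measure_FF[OF N less_imp_le[OF \<delta>(1)] \<delta>(2)])
  also have "\<dots> = (real N * \<delta>) powr DIM('a)"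
    using N \<delta> by (simp add: powr_realpow power_mult_distrib)
  finally have m3: "m \<le> (real N * \<delta>) powr DIM('a)" .
  have T: "(\<omega> * R powr DIM('a)) powr (1/lam - 1/p) * m powr (1/p) \<le> ?B"
    using morrey_term_bound[OF \<omega> _ p lam _ \<delta>(1) less_imp_le[OF \<delta>(2)] R0 m0 m1 m2 m3] N
    by (simp add: \<omega>_def)
  have "ennreal (measure lebesgue (ball c R \<inter> UNIV) powr (1/lam - 1/p)) * lorentz_norm (ball c R \<inter> UNIV) p \<kappa> ?g
     \<le> ennreal ((\<omega> * R powr DIM('a)) powr (1/lam - 1/p)) * ennreal (m powr (1/p))"
  proof -
    have "measure lebesgue (ball c R \<inter> UNIV) = \<omega> * R powr DIM('a)" using mb by simp
    then show ?thesis by (simp only:) (rule mult_left_mono[OF L], simp)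
  qed
  also have "\<dots> \<le> ennreal ?B"
    using T by (simp add: ennreal_mult'[symmetric] ennreal_leI)
  finally show ?thesis .
  qed
  show ?thesis unfolding morrey_lorentz_norm_def
    using * by (intro SUP_least) auto
qed

lemma cube_sub_ball:
  assumes \<delta>: "0 < \<delta>"
  shows "(cube N \<delta> k :: 'a::euclidean_space set) \<subseteq> ball (corner N k + (\<delta>/2) *\<^sub>R One) (real DIM('a) * \<delta>)"
    (is "_ \<subseteq> ball ?z _")
proof
  fix y :: 'a assume y: "y \<in> cube N \<delta> k"
  have "norm (?z - y) \<le> (\<Sum>b\<in>Basis. \<bar>(?z - y) \<bullet> b\<bar>)" by (rule norm_le_l1)
  also have "\<dots> \<le> (\<Sum>b\<in>(Basis::'a set). \<delta> / 2)"
  proof (rule sum_mono)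
    fix b :: 'a assume b: "b \<in> Basis"
    have "real (k b) / N \<le> y \<bullet> b" "y \<bullet> b \<le> real (k b) / N + \<delta>" using y b unfolding mem_cube by auto
    moreover have "(?z - y) \<bullet> b = real (k b) / N + \<delta>/2 - y \<bullet> b"
      using b by (simp add: inner_diff_left inner_add_left corner_inner)
    ultimately show "\<bar>(?z - y) \<bullet> b\<bar> \<le> \<delta> / 2" by linarith
  qed
  also have "\<dots> < real DIM('a) * \<delta>" using \<delta> by simp
  finally show "y \<in> ball ?z (real DIM('a) * \<delta>)" by (simp add: dist_norm)
qed

lemma frac_max_FF:
  assumes \<delta>: "0 < \<delta>" and x: "x \<in> FF N \<delta>"
  shows "ennreal ((unit_ball_vol (DIM('a)) * (real DIM('a) * \<delta>) ^ DIM('a)) powr (\<alpha> / real DIM('a) - 1) * \<delta> ^ DIM('a))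
     \<le> frac_max \<alpha> (indicator (FF N \<delta> :: 'a::euclidean_space set) :: 'a \<Rightarrow> real) x"
proof -
  obtain k where k: "k \<in> KK N" "x \<in> cube N \<delta> k" using x unfolding FF_def by auto
  define z :: 'a where "z = corner N k + (\<delta>/2) *\<^sub>R One"
  define r where "r = real DIM('a) * \<delta>"
  have r: "0 < r" using \<delta> by (simp add: r_def)
  have sub: "cube N \<delta> k \<subseteq> ball z r" unfolding z_def r_def by (rule cube_sub_ball[OF \<delta>])
  have "ennreal (\<delta> ^ DIM('a)) = emeasure lebesgue (cube N \<delta> k)"
    using emeasure_cube[of \<delta> N k] \<delta> by simp
  also have "\<dots> = (\<integral>\<^sup>+ y. indicator (cube N \<delta> k) y \<partial>lebesgue)"
    by (simp add: cube_lmeas fmeasurableD)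
  also have "\<dots> \<le> (\<integral>\<^sup>+ y \<in> ball z r. ennreal \<bar>indicator (FF N \<delta>) y :: real\<bar> \<partial>lebesgue)"
  proof (rule nn_integral_mono)
    fix y
    show "indicator (cube N \<delta> k) y \<le> ennreal \<bar>indicator (FF N \<delta>) y :: real\<bar> * indicator (ball z r) y"
      using sub k(1) unfolding FF_def by (auto simp: indicator_def)
  qed
  finally have I: "ennreal (\<delta> ^ DIM('a)) \<le> (\<integral>\<^sup>+ y \<in> ball z r. ennreal \<bar>indicator (FF N \<delta>) y :: real\<bar> \<partial>lebesgue)" .
  have mb: "measure lebesgue (ball z r) = unit_ball_vol (DIM('a)) * r ^ DIM('a)"
    using r by (simp add: content_ball)
  have "ennreal ((unit_ball_vol (DIM('a)) * r ^ DIM('a)) powr (\<alpha> / real DIM('a) - 1) * \<delta> ^ DIM('a))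
     = ennreal (measure lebesgue (ball z r) powr (\<alpha> / real DIM('a) - 1)) * ennreal (\<delta> ^ DIM('a))"
    unfolding mb by (rule ennreal_mult) (use \<delta> in auto)
  also have "\<dots> \<le> ennreal (measure lebesgue (ball z r) powr (\<alpha> / real DIM('a) - 1)) *
       (\<integral>\<^sup>+ y \<in> ball z r. ennreal \<bar>indicator (FF N \<delta>) y :: real\<bar> \<partial>lebesgue)"
    by (rule mult_left_mono[OF I]) simp
  also have "\<dots> \<le> frac_max \<alpha> (indicator (FF N \<delta>)) x"
    using frac_max_ge[OF r, of x z \<alpha> "indicator (FF N \<delta>)"] sub k(2) by auto
  finally show ?thesis by (simp add: r_def)
qed

lemma FF_sub_ball:
  assumes N: "0 < N" and \<delta>: "0 < \<delta>" "\<delta> < 1 / real N"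
  shows "FF N \<delta> \<subseteq> ball (0::'a::euclidean_space) (2 * real DIM('a))"
proof
  fix x :: 'a assume "x \<in> FF N \<delta>"
  then obtain k where k: "k \<in> KK N" "x \<in> cube N \<delta> k" unfolding FF_def by auto
  have "norm x \<le> (\<Sum>b\<in>Basis. \<bar>x \<bullet> b\<bar>)" by (rule norm_le_l1)
  also have "\<dots> < (\<Sum>b\<in>(Basis::'a set). 2)"
  proof (rule sum_strict_mono)
    fix b :: 'a assume b: "b \<in> Basis"
    have h: "real (k b) / N \<le> x \<bullet> b" "x \<bullet> b \<le> real (k b) / N + \<delta>" using k(2) b unfolding mem_cube by auto
    have "k b < N" using k(1) b unfolding KK_def by auto
    then have "real (k b) / N \<le> 1" using N by simp
    moreover have "\<delta> < 1" using \<delta> N by (smt (verit) divide_le_eq_1 of_nat_0_less_iff of_nat_1 of_nat_le_iff less_one not_less)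
    moreover have "0 \<le> real (k b) / N" by simp
    ultimately show "\<bar>x \<bullet> b\<bar> < 2" using h by linarith
  qed auto
  also have "\<dots> = 2 * real DIM('a)" by simp
  finally show "x \<in> ball 0 (2 * real DIM('a))" by simp
qed

lemma morrey_ge:
  fixes c :: "'a::euclidean_space"
  assumes "0 < R"
  shows "ennreal (measure lebesgue (ball c R \<inter> \<Omega>) powr (1/lam - 1/q)) * lorentz_norm (ball c R \<inter> \<Omega>) q \<kappa> g
     \<le> morrey_lorentz_norm \<Omega> lam q \<kappa> g"
  unfolding morrey_lorentz_norm_def using assms
  by (intro SUP_upper2[where i="(c, R)"]) auto

lemma lhs_lower:
  fixes N :: nat and \<delta> rr mu \<alpha> :: real and \<nu> :: ennreal
  assumes N: "0 < N" and \<delta>: "0 < \<delta>" "\<delta> < 1 / real N" and rr: "1 \<le> rr" and \<nu>: "1 \<le> \<nu>"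
  shows "ennreal (measure lebesgue (ball (0::'a::euclidean_space) (2 * real DIM('a))) powr (1/mu - 1/rr) *
      ((unit_ball_vol (DIM('a)) * (real DIM('a) * \<delta>) ^ DIM('a)) powr (\<alpha> / real DIM('a) - 1) * \<delta> ^ DIM('a)
        * ((real N ^ DIM('a) * \<delta> ^ DIM('a)) / 2) powr (1/rr) / (2*rr)))
    \<le> morrey_lorentz_norm UNIV mu rr \<nu> (frac_max \<alpha> (indicator (FF N \<delta> :: 'a set)))"
proof -
  define Q :: "'a set" where "Q = ball 0 (2 * real DIM('a))"
  define c where "c = (unit_ball_vol (DIM('a)) * (real DIM('a) * \<delta>) ^ DIM('a)) powr (\<alpha> / real DIM('a) - 1) * \<delta> ^ DIM('a)"
  define e where "e = real N ^ DIM('a) * \<delta> ^ DIM('a)"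
  have "0 < unit_ball_vol (DIM('a)) * (real DIM('a) * \<delta>) ^ DIM('a)" using \<delta> by simp
  then have c: "0 < c" using \<delta> unfolding c_def by (intro mult_pos_pos) (auto simp: less_imp_neq[symmetric])
  have e0: "0 < e" using \<delta> N by (simp add: e_def)
  have e: "emeasure lebesgue (FF N \<delta> :: 'a set) = ennreal e"
    using emeasure_eq_measure2[OF FF_lmeas[of N \<delta>, where 'a='a]] measure_FF[OF N less_imp_le[OF \<delta>(1)] \<delta>(2), where 'a='a]
    unfolding e_def by (metis (no_types))
  have L: "ennreal (c * (e/2) powr (1/rr) / (2*rr)) \<le> lorentz_norm (Q \<inter> UNIV) rr \<nu> (frac_max \<alpha> (indicator (FF N \<delta>)))"
  proof (rule lorentz_lower)
    show "FF N \<delta> \<subseteq> Q \<inter> UNIV" using FF_sub_ball[OF N \<delta>] by (simp add: Q_def)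
    show "Q \<inter> UNIV \<in> sets lebesgue" by (simp add: Q_def)
    show "FF N \<delta> \<in> sets lebesgue" by (simp add: FF_lmeas fmeasurableD)
    show "\<And>s. {x \<in> Q \<inter> UNIV. ennreal s < frac_max \<alpha> (indicator (FF N \<delta>)) x} \<in> sets lebesgue"
      by (rule frac_max_meas) (simp add: Q_def)
    show "\<And>x::'a. x \<in> FF N \<delta> \<Longrightarrow> ennreal c \<le> frac_max \<alpha> (indicator (FF N \<delta>)) x"
      unfolding c_def using frac_max_FF[OF \<delta>(1), of _ N \<alpha>, where 'a='a] by simp
  qed (use e e0 c rr \<nu> in auto)
  have "ennreal (measure lebesgue Q powr (1/mu - 1/rr) * (c * (e/2) powr (1/rr) / (2*rr)))
      = ennreal (measure lebesgue (Q \<inter> UNIV) powr (1/mu - 1/rr)) * ennreal (c * (e/2) powr (1/rr) / (2*rr))"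
    by (simp only: Int_UNIV_right, rule ennreal_mult) (use c e0 rr in auto)
  also have "\<dots> \<le> ennreal (measure lebesgue (Q \<inter> UNIV) powr (1/mu - 1/rr)) * lorentz_norm (Q \<inter> UNIV) rr \<nu> (frac_max \<alpha> (indicator (FF N \<delta>)))"
    by (rule mult_left_mono[OF L]) simp
  also have "\<dots> \<le> morrey_lorentz_norm UNIV mu rr \<nu> (frac_max \<alpha> (indicator (FF N \<delta> :: 'a set)))"
    unfolding Q_def by (rule morrey_ge) simp
  finally show ?thesis by (simp add: Q_def c_def e_def mult.assoc)
qed

lemma LB_eq:
  fixes nn :: nat and t b \<omega> \<alpha> rr Qe :: real
  assumes t: "0 < t" and \<omega>: "0 < \<omega>" and nn: "0 < nn"
  defines "\<delta> \<equiv> t powr (-b)"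
  shows "Qe * ((\<omega> * (real nn * \<delta>) ^ nn) powr (\<alpha> / real nn - 1) * \<delta> ^ nn
        * ((t ^ nn * \<delta> ^ nn) / 2) powr (1/rr) / (2*rr))
     = (Qe * (\<omega> * real nn ^ nn) powr (\<alpha> / real nn - 1) * 2 powr (-1/rr) / (2*rr))
        * t powr (- b * \<alpha> + (1 - b) * real nn / rr)"
proof -
  define n where "n = real nn"
  have n: "0 < n" using nn by (simp add: n_def)
  have \<delta>: "0 < \<delta>" using t by (simp add: \<delta>_def)
  have \<delta>n: "\<delta> ^ nn = \<delta> powr n" using \<delta> by (simp add: n_def powr_realpow)
  have 1: "(\<omega> * (n * \<delta>) ^ nn) powr (\<alpha> / n - 1) = (\<omega> * n ^ nn) powr (\<alpha> / n - 1) * \<delta> powr (n * (\<alpha> / n - 1))"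
    using \<omega> n \<delta> by (simp add: power_mult_distrib powr_mult \<delta>n powr_powr mult.assoc)
  have 2: "\<delta> powr (n * (\<alpha> / n - 1)) * \<delta> powr n = \<delta> powr \<alpha>"
    using n by (simp add: powr_add[symmetric] algebra_simps)
  have 3: "((t ^ nn * \<delta> ^ nn) / 2) powr (1/rr) = (t * \<delta>) powr (n / rr) * 2 powr (-1/rr)"
  proof -
    have e1: "t ^ nn * \<delta> ^ nn = (t * \<delta>) powr n"
      using t \<delta> by (simp add: power_mult_distrib[symmetric] powr_realpow n_def)
    have "((t ^ nn * \<delta> ^ nn) / 2) powr (1/rr) = (t ^ nn * \<delta> ^ nn) powr (1/rr) / 2 powr (1/rr)"
      using t \<delta> by (intro powr_divide)
    also have "\<dots> = (t * \<delta>) powr (n / rr) / 2 powr (1/rr)"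
      unfolding e1 by (simp add: powr_powr)
    also have "\<dots> = (t * \<delta>) powr (n / rr) * 2 powr (-1/rr)"
      by (simp add: powr_minus_divide divide_inverse powr_minus)
    finally show ?thesis .
  qed
  have 4: "\<delta> powr \<alpha> = t powr (- b * \<alpha>)" using t by (simp add: \<delta>_def powr_powr)
  have 5: "(t * \<delta>) powr (n / rr) = t powr ((1 - b) * n / rr)"
  proof -
    have "t * \<delta> = t powr (1 - b)" using t by (simp add: \<delta>_def powr_diff powr_minus divide_inverse)
    then show ?thesis using t by (simp add: powr_powr)
  qed
  have 6: "t powr (- b * \<alpha> + (1 - b) * n / rr) = \<delta> powr (n * (\<alpha> / n - 1)) * \<delta> powr n * (t * \<delta>) powr (n / rr)"
    by (simp only: powr_add 4[symmetric] 5[symmetric] 2)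
  have ring: "Qe*(X*A*Bn*(Y*Z)/W) = (Qe*X*Z/W)*(A*Bn*Y)" for Qe X A Bn Y Z W :: real
    by (simp add: ac_simps)
  show ?thesis
    unfolding n_def[symmetric] 1 3 unfolding \<delta>n 6
    by (rule ring)
qed

lemma S_eq:
  fixes t p lam n :: real
  assumes t: "0 < t" and p: "0 < p" and lam: "p < lam"
  defines "b \<equiv> lam / (lam - p)"
  shows "(t powr (-b)) powr (n/lam) + (t * t powr (-b)) powr (n/p) = 2 * t powr (- b * n / lam)"
proof -
  have "t * t powr (-b) = t powr (1 - b)" using t by (simp add: powr_diff powr_minus divide_inverse)
  moreover have "(1 - b) * (n / p) = - b * n / lam"
    using p lam unfolding b_def by (simp add: field_simps)
  ultimately show ?thesis using t by (simp add: powr_powr)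
qed

lemma exp_pos:
  fixes p lam r mu n \<alpha> :: real
  assumes p: "0 < p" "p < lam" and r: "0 < r" "r < mu" and rp: "r / mu > p / lam" and n: "0 < n"
    and \<alpha>: "\<alpha> = n * (1/lam - 1/mu)"
  defines "b \<equiv> lam / (lam - p)"
  shows "- b * \<alpha> + (1 - b) * n / r - (- b * n / lam) > 0"
proof -
  have lam0: "0 < lam" "0 < lam - p" using p by auto
  have mu0: "0 < mu" using r by auto
  have "p * mu < r * lam" using rp lam0 mu0 by (simp add: field_simps)
  then have "0 < n * (lam / mu - p / r)" using n mu0 r by (simp add: field_simps)
  also have "n * (lam / mu - p / r) = (lam - p) * (- b * \<alpha> + (1 - b) * n / r - (- b * n / lam))"
  proof -
    have b1: "b * (lam - p) = lam" "(1 - b) * (lam - p) = - p"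
      using lam0 unfolding b_def by (simp_all add: field_simps)
    have "(lam - p) * (- b * \<alpha> + (1 - b) * n / r - (- b * n / lam))
        = - (b * (lam - p)) * \<alpha> + ((1 - b) * (lam - p)) * n / r + (b * (lam - p)) * n / lam"
      by (simp add: algebra_simps add_divide_distrib diff_divide_distrib)
    also have "\<dots> = - lam * \<alpha> - p * n / r + n"
      using lam0 by (simp add: b1)
    also have "\<dots> = n * (lam / mu - p / r)"
      using lam0 mu0 unfolding \<alpha> by (simp add: algebra_simps)
    finally show ?thesis by simp
  qed
  finally show ?thesis using lam0 by (simp add: zero_less_mult_iff)
qed

theorem theorem3p4:
  fixes p lam r \<mu> \<alpha> :: real and \<kappa> \<nu> :: ennreal
  assumes "1 < p" "p < lam" "1 < r" "r < \<mu>" "lam < \<mu>" "r / \<mu> > p / lam"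
    and "1 \<le> \<kappa>" and "1 \<le> \<nu>"
    and "\<alpha> / real DIM('a::euclidean_space) = 1 / lam - 1 / \<mu>"
  shows "\<not> (\<exists>C::real. \<forall>f :: 'a \<Rightarrow> real.
            f \<in> borel_measurable lebesgue \<and>
            morrey_lorentz_norm UNIV lam p \<kappa> (\<lambda>x. ennreal \<bar>f x\<bar>) < top \<longrightarrow>
            morrey_lorentz_norm UNIV \<mu> r \<nu> (frac_max \<alpha> f)
              \<le> ennreal C * morrey_lorentz_norm UNIV lam p \<kappa> (\<lambda>x. ennreal \<bar>f x\<bar>))"
proof
  assume "\<exists>C::real. \<forall>f :: 'a \<Rightarrow> real.
            f \<in> borel_measurable lebesgue \<and>
            morrey_lorentz_norm UNIV lam p \<kappa> (\<lambda>x. ennreal \<bar>f x\<bar>) < top \<longrightarrow>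
            morrey_lorentz_norm UNIV \<mu> r \<nu> (frac_max \<alpha> f)
              \<le> ennreal C * morrey_lorentz_norm UNIV lam p \<kappa> (\<lambda>x. ennreal \<bar>f x\<bar>)"
  then obtain C where H: "\<And>f :: 'a \<Rightarrow> real.
            f \<in> borel_measurable lebesgue \<and>
            morrey_lorentz_norm UNIV lam p \<kappa> (\<lambda>x. ennreal \<bar>f x\<bar>) < top \<Longrightarrow>
            morrey_lorentz_norm UNIV \<mu> r \<nu> (frac_max \<alpha> f)
              \<le> ennreal C * morrey_lorentz_norm UNIV lam p \<kappa> (\<lambda>x. ennreal \<bar>f x\<bar>)"
    by blast
  define nn where "nn = DIM('a)"
  define n where "n = real nn"
  have nn: "0 < nn" by (simp add: nn_def)
  have n: "0 < n" by (simp add: n_def nn_def)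
  define \<omega> where "\<omega> = unit_ball_vol n"
  have \<omega>: "0 < \<omega>" using n by (simp add: \<omega>_def)
  define K where "K = \<omega> powr (1/lam) + \<omega> powr (1/lam - 1/p) * 5 powr (n/p) + \<omega> powr (1/lam - 1/p)"
  have K: "0 \<le> K" by (simp add: K_def)
  have \<alpha>: "\<alpha> = n * (1/lam - 1/\<mu>)" using assms(9) n by (simp add: n_def nn_def field_simps)
  define Qe where "Qe = measure lebesgue (ball (0::'a) (2 * real DIM('a))) powr (1/\<mu> - 1/r)"
  have Qe: "0 < Qe"
  proof -
    have "0 < measure lebesgue (ball (0::'a) (2 * real DIM('a)))" by simp
    then show ?thesis unfolding Qe_def by simp
  qed
  define B where "B = Qe * (\<omega> * n ^ nn) powr (\<alpha> / n - 1) * 2 powr (-1/r) / (2*r)"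
  have B: "0 < B" using Qe \<omega> n assms(3) by (simp add: B_def)
  define b where "b = lam / (lam - p)"
  have b: "1 < b" using assms(1,2) by (simp add: b_def)
  define u where "u = - b * n / lam"
  define v where "v = - b * \<alpha> + (1 - b) * n / r"
  define w where "w = v - u"
  have w: "0 < w" unfolding w_def v_def u_def b_def
    by (rule exp_pos) (use assms n \<alpha> in auto)
  define D where "D = 2 * (max C 0 * K) / B"
  define y where "y = max D 1 powr (1/w)"
  define N where "N = nat \<lceil>y\<rceil> + 2"
  define t where "t = real N"
  have t2: "2 \<le> t" by (simp add: t_def N_def)
  have ty: "y < t" unfolding t_def N_def by linarith
  have tw: "D < t powr w"
  proof -
    have "D \<le> max D 1" by simp
    also have "\<dots> = y powr w" using w by (simp add: y_def powr_powr)
    also have "\<dots> < t powr w" using w ty by (intro powr_less_mono2) (auto simp: y_def)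
    finally show ?thesis .
  qed
  have N: "0 < N" by (simp add: N_def)
  define \<delta> where "\<delta> = t powr (-b)"
  have \<delta>: "0 < \<delta>" using t2 by (simp add: \<delta>_def)
  have \<delta>t: "\<delta> < 1 / real N"
  proof -
    have "t powr (-b) < t powr (-1)" using b t2 by (intro powr_less_mono) auto
    then show ?thesis using t2 by (simp add: \<delta>_def t_def powr_minus divide_inverse)
  qed
  define f :: "'a \<Rightarrow> real" where "f = indicator (FF N \<delta>)"
  have UB: "morrey_lorentz_norm UNIV lam p \<kappa> (\<lambda>x. ennreal \<bar>f x\<bar>)
     \<le> ennreal (K * (\<delta> powr (n/lam) + (t * \<delta>) powr (n/p)))"
    unfolding f_def K_def \<omega>_def n_def nn_def t_def
    by (rule morrey_f_upper[OF N \<delta> \<delta>t _ assms(2,7)]) (use assms in auto)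
  have fm: "f \<in> borel_measurable lebesgue"
    unfolding f_def by (rule borel_measurable_indicator) (simp add: FF_lmeas fmeasurableD)
  have fin: "morrey_lorentz_norm UNIV lam p \<kappa> (\<lambda>x. ennreal \<bar>f x\<bar>) < top"
    using UB by (rule le_less_trans) simp
  have LB: "ennreal (B * t powr v) \<le> morrey_lorentz_norm UNIV \<mu> r \<nu> (frac_max \<alpha> f)"
  proof -
    have "B * t powr v = Qe * ((\<omega> * (real nn * \<delta>) ^ nn) powr (\<alpha> / real nn - 1) * \<delta> ^ nn
        * ((t ^ nn * \<delta> ^ nn) / 2) powr (1/r) / (2*r))"
      unfolding B_def v_def \<delta>_def n_def
      by (rule LB_eq[symmetric]) (use t2 \<omega> nn in auto)
    then show ?thesis
      using lhs_lower[OF N \<delta> \<delta>t _ assms(8), of r \<mu> \<alpha>, where 'a='a] assms(3)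
      unfolding f_def Qe_def \<omega>_def n_def nn_def t_def by simp
  qed
  have S: "\<delta> powr (n/lam) + (t * \<delta>) powr (n/p) = 2 * t powr u"
    unfolding \<delta>_def u_def b_def by (rule S_eq) (use t2 assms in auto)
  have "ennreal (B * t powr v) \<le> ennreal C * ennreal (K * (2 * t powr u))"
    using LB H[of f] fm fin UB S by (metis (no_types, lifting) mult_left_mono order_trans zero_le)
  show False
  proof (cases "C \<le> 0")
    case True
    then have "ennreal C = 0" by (simp add: ennreal_eq_0_iff)
    then have "ennreal (B * t powr v) \<le> 0"
      using \<open>ennreal (B * t powr v) \<le> ennreal C * ennreal (K * (2 * t powr u))\<close> by simp
    moreover have "0 < B * t powr v" using B t2 by simp
    ultimately show False using B t2 by (simp add: ennreal_le_iff2)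
  next
    case False
    then have "ennreal (B * t powr v) \<le> ennreal (C * (K * (2 * t powr u)))"
      using \<open>ennreal (B * t powr v) \<le> ennreal C * ennreal (K * (2 * t powr u))\<close> K
      by (simp add: ennreal_mult)
    then have "B * t powr v \<le> C * (K * (2 * t powr u))"
      using False K by (simp add: ennreal_le_iff)
    moreover have "t powr v = t powr w * t powr u" by (simp add: w_def powr_add[symmetric])
    ultimately have "B * t powr w * t powr u \<le> (2 * C * K) * t powr u" by (simp add: ac_simps)
    then have "B * t powr w \<le> 2 * C * K" using t2 by simp
    then have "t powr w \<le> D" using B False by (simp add: D_def field_simps)
    with tw show False by simp
  qed
qed

end
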